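(* Let $d\ge3$ and consider $\Omega_\varepsilon$ with perturbation $\rho=Y_{p',q'}$ (i.e. $A_{p,q}=\delta_{p,p'}\delta_{q,q'}$). For every $k\in\mathbb{Z}^+$ and every $j=1,\dots,N(d,k)$, with $\lambda^{(1)}_{k,j}$ the first-order coefficients of the Steklov eigenvalue branches emanating from $k$ (i.e. the eigenvalues of $M^{(d,k)}$): (1) if $p'=0$ (so $\rho=Y_{0,1}=|S^d|^{-1/2}$ is constant), then $\lambda^{(1)}_{k,j}=-k|S^d|^{-1/2}$; (2) if $p'$ is odd, then $\lambda^{(1)}_{k,j}=0$, i.e. the Steklov eigenvalue $\lambda^\varepsilon_{k,j}$ is unperturbed at first order in $\varepsilon$.
   Context: Hyperspherical coordinates on $\mathbb{R}^{d+1}$; $\nabla_{S^d}$ the gradient on $S^d$, $d\sigma_d$ the surface measure, $|S^d|$ the surface area. $N(d,0)=1$, $N(d,\ell)=\binom{d+\ell}{d}-\binom{d+\ell-2}{d}$ for $\ell\ge1$. $\{Y_k^m\}$ is an orthonormal basis of complex degree-$k$ spherical harmonics, $\{Y_{p,q}\}_{q=1}^{N(d,p)}$ an orthonormal basis of real degree-$p$ spherical harmonics with $Y_{0,1}=|S^d|^{-1/2}$. For real $\rho\in C^1(S^d)$, $\Omega_\varepsilon=\{(r,\hat\theta):0\le r\le1+\varepsilon\rho(\hat\theta)\}$. The Steklov eigenvalues of $\Omega_\varepsilon$ near $k$ (of which there are $N(d,k)$ with multiplicity) have expansions $\lambda^\varepsilon_{k,j}=k+\varepsilon\lambda^{(1)}_{k,j}+O(\varepsilon^2)$,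 where $\lambda^{(1)}_{k,1}\le\cdots\le\lambda^{(1)}_{k,N(d,k)}$ are the eigenvalues of the Hermitian matrix $M^{(d,k)}_{m,n}=-\int_{S^d}k\rho\,Y_k^m\overline{Y_k^n}\,d\sigma_d-\int_{S^d}(\nabla_{S^d}\rho\cdot\nabla_{S^d}Y_k^m)\overline{Y_k^n}\,d\sigma_d$. *)

theory Defs
  imports "HOL-Analysis.Analysis" "Jordan_Normal_Form.Char_Poly"
begin

text \<open>The unit sphere S^d is modelled as sphere 0 1 in real^'n with CARD('n) = d+1.\<close>

text \<open>N(d,l): dimension of the space of degree-l spherical harmonics on S^d.\<close>
definition Ndim :: "nat \<Rightarrow> nat \<Rightarrow> nat" where
  "Ndim d l = (if l = 0 then 1 else (d + l choose d) - (d + l - 2 choose d))"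

definition hom_poly :: "nat \<Rightarrow> (real^'n \<Rightarrow> 'a::real_normed_field) \<Rightarrow> bool" where
  "hom_poly k P \<longleftrightarrow> (\<exists>A c. finite A \<and> (\<forall>\<alpha>\<in>A. (\<Sum>i\<in>UNIV. \<alpha> i) = k) \<and>
      (\<forall>x. P x = (\<Sum>\<alpha>\<in>A. c \<alpha> * (\<Prod>i\<in>UNIV. of_real (x $ i) ^ \<alpha> i))))"

definition laplacian :: "(real^'n \<Rightarrow> 'a::real_normed_vector) \<Rightarrow> real^'n \<Rightarrow> 'a" where
  "laplacian P x = (\<Sum>i\<in>UNIV. frechet_derivative
      (\<lambda>y. frechet_derivative P (at y) (axis i 1)) (at x) (axis i 1))"

definition sph_harm :: "nat \<Rightarrow> (real^'n \<Rightarrow> 'a::real_normed_field) \<Rightarrow> bool" where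
  "sph_harm k Y \<longleftrightarrow> (\<exists>P. hom_poly k P \<and> (\<forall>x. laplacian P x = 0) \<and>
      (\<forall>x\<in>sphere 0 1. Y x = P x))"

text \<open>Integral over S^d with respect to the surface measure sigma_d, via the cone formula
  int_{S^d} f dsigma = (d+1) * int_{B^{d+1}} f(x/|x|) dx.\<close>
definition sphere_int :: "(real^'n::finite \<Rightarrow> 'a::euclidean_space) \<Rightarrow> 'a" where
  "sphere_int f = real CARD('n) *\<^sub>R integral (ball 0 1) (\<lambda>x. f (sgn x))"

definition sphere_area :: "'n::finite itself \<Rightarrow> real" where
  "sphere_area _ = sphere_int (\<lambda>x::real^'n. 1::real)"

text \<open>Partial derivative of the (degree-0 homogeneous) extension x \<mapsto> f(x/|x|); at points of
  S^d the vector of these is the spherical gradient nabla_{S^d} f.\<close>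
definition sph_partial :: "(real^'n \<Rightarrow> 'a::real_normed_vector) \<Rightarrow> 'n \<Rightarrow> real^'n \<Rightarrow> 'a" where
  "sph_partial f i x = frechet_derivative (\<lambda>y. f (sgn y)) (at x) (axis i 1)"

definition sph_grad_dot :: "(real^'n \<Rightarrow> real) \<Rightarrow> (real^'n \<Rightarrow> complex) \<Rightarrow> real^'n \<Rightarrow> complex" where
  "sph_grad_dot \<rho> Y x = (\<Sum>i\<in>UNIV. complex_of_real (sph_partial \<rho> i x) * sph_partial Y i x)"

definition pert_matrix :: "nat \<Rightarrow> (real^'n \<Rightarrow> real) \<Rightarrow> (nat \<Rightarrow> real^'n \<Rightarrow> complex) \<Rightarrow> nat \<Rightarrow> complex mat" where
  "pert_matrix k \<rho> Y N = mat N N (\<lambda>(m, n).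
     - sphere_int (\<lambda>x. of_nat k * complex_of_real (\<rho> x) * Y m x * cnj (Y n x))
     - sphere_int (\<lambda>x. sph_grad_dot \<rho> (Y m) x * cnj (Y n x)))"

definition sph_onb :: "nat \<Rightarrow> nat \<Rightarrow> (nat \<Rightarrow> real^'n \<Rightarrow> complex) \<Rightarrow> bool" where
  "sph_onb k N Y \<longleftrightarrow> (\<forall>m<N. sph_harm k (Y m)) \<and>
     (\<forall>m<N. \<forall>n<N. sphere_int (\<lambda>x. Y m x * cnj (Y n x)) = (if m = n then 1 else 0)) \<and>
     (\<forall>f::real^'n \<Rightarrow> complex. sph_harm k f \<longrightarrow>
        (\<exists>c. \<forall>x\<in>sphere 0 1. f x = (\<Sum>m<N. c m * Y m x)))"

end

theory Submission
  imports Defs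
begin
lemma sgn_differentiable_at:
  fixes y :: "'a::real_inner"
  assumes "y \<noteq> 0" shows "sgn differentiable (at y)"
proof -
  have e: "sgn = (\<lambda>y::'a. inverse (norm y) *\<^sub>R y)"
    by (auto simp: sgn_div_norm fun_eq_iff)
  have "(\<lambda>y::'a. inverse (norm y) *\<^sub>R y) differentiable (at y)"
    by (rule differentiable_scaleR differentiable_inverse differentiable_norm_at differentiable_ident
         | use assms in simp)+
  then show ?thesis by (simp only: e)
qed

lemma differentiable_prod_fin:
  fixes f :: "'i \<Rightarrow> 'a::real_normed_vector \<Rightarrow> 'b::{real_normed_algebra,comm_ring_1}"
  assumes "finite S" "\<forall>i\<in>S. f i differentiable (at x)"
  shows "(\<lambda>x. \<Prod>i\<in>S. f i x) differentiable (at x)"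
  using assms
proof (induction S rule: finite_induct)
  case empty then show ?case by simp
next
  case (insert a S)
  then show ?case by (simp add: prod.insert_remove differentiable_mult)
qed

lemma hom_poly_neg:
  fixes P :: "real^'n \<Rightarrow> 'a::real_normed_field" and x :: "real^'n"
  assumes "hom_poly k P" shows "P (-x) = (-1)^k * P x"
proof -
  obtain A c where A: "finite A" "\<forall>\<alpha>\<in>A. (\<Sum>i\<in>UNIV. \<alpha> i) = k"
    and P0: "\<forall>x. P x = (\<Sum>\<alpha>\<in>A. c \<alpha> * (\<Prod>i\<in>UNIV. of_real (vec_nth x i) ^ \<alpha> i))"
    using assms unfolding hom_poly_def by (elim exE conjE) (rule that)
  note P = P0[rule_format]
  have f: "(of_real (vec_nth (-x) i) :: 'a) ^ \<alpha> i = (-1) ^ \<alpha> i * of_real (vec_nth x i) ^ \<alpha> i" for i :: 'n and \<alpha> :: "'n \<Rightarrow> nat"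
  proof -
    have h: "(of_real (vec_nth (-x) i) :: 'a) = - of_real (vec_nth x i)" by simp
    show ?thesis by (simp only: h power_minus[of "of_real (vec_nth x i)::'a"])
  qed
  have e: "(\<Prod>i\<in>UNIV. (of_real (vec_nth (-x) i) :: 'a) ^ \<alpha> i) = (-1)^(\<Sum>i\<in>UNIV. \<alpha> i) * (\<Prod>i\<in>UNIV. of_real (vec_nth x i) ^ \<alpha> i)" for \<alpha> :: "'n \<Rightarrow> nat"
    unfolding f prod.distrib power_sum ..
  have "P (-x) = (\<Sum>\<alpha>\<in>A. c \<alpha> * ((-1)^(\<Sum>i\<in>UNIV. \<alpha> i) * (\<Prod>i\<in>UNIV. of_real (vec_nth x i) ^ \<alpha> i)))"
    unfolding P e ..
  also have "\<dots> = (\<Sum>\<alpha>\<in>A. (-1)^k * (c \<alpha> * (\<Prod>i\<in>UNIV. of_real (vec_nth x i) ^ \<alpha> i)))"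
    using A(2) by (intro sum.cong refl) (simp add: mult.left_commute)
  also have "\<dots> = (-1)^k * P x" unfolding P by (rule sum_distrib_left[symmetric])
  finally show ?thesis .
qed
lemma hom_poly_differentiable:
  fixes P :: "real^'n \<Rightarrow> 'a::real_normed_field"
  assumes "hom_poly k P" shows "P differentiable (at x)"
proof -
  obtain A c where A: "finite A"
    and P: "\<And>x. P x = (\<Sum>\<alpha>\<in>A. c \<alpha> * (\<Prod>i\<in>UNIV. of_real (x $ i) ^ \<alpha> i))"
    using assms unfolding hom_poly_def by blast
  have P': "P = (\<lambda>x. \<Sum>\<alpha>\<in>A. c \<alpha> * (\<Prod>i\<in>UNIV. of_real (x $ i) ^ \<alpha> i))"
    using P by auto
  have comp: "(\<lambda>x::real^'n. (of_real (x $ i) :: 'a)) differentiable (at x)" for i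
    by (rule bounded_linear_imp_differentiable) 
       (intro bounded_linear_compose[OF bounded_linear_of_real] bounded_linear_vec_nth)
  have pr: "(\<lambda>x::real^'n. \<Prod>i\<in>UNIV. (of_real (x $ i) :: 'a) ^ \<alpha> i) differentiable (at x)" for \<alpha>
    by (rule differentiable_prod_fin) (auto intro!: differentiable_power comp)
  show ?thesis unfolding P' using A
    by (intro differentiable_sum ballI differentiable_mult differentiable_const pr) auto
qed
lemma bl_neg: "bounded_linear D \<Longrightarrow> D (-v) = - D v"
  by (simp add: linear_simps)

lemma sph_harm_neg:
  fixes Y :: "real^'n \<Rightarrow> 'a::real_normed_field"
  assumes "sph_harm k Y" "z \<in> sphere 0 1" shows "Y (-z) = (-1)^k * Y z"
proof -
  obtain P where P: "hom_poly k P" "\<forall>x\<in>sphere 0 1. Y x = P x"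
    using assms(1) unfolding sph_harm_def by blast
  have "-z \<in> sphere 0 1" using assms(2) by simp
  then show ?thesis using P assms(2) hom_poly_neg[OF P(1)] by simp
qed

lemma sph_harm_sgn_neg:
  fixes Y :: "real^'n \<Rightarrow> 'a::real_normed_field"
  assumes "sph_harm k Y" "y \<noteq> 0" shows "Y (sgn (-y)) = (-1)^k * Y (sgn y)"
  using sph_harm_neg[OF assms(1), of "sgn y"] assms(2) by (simp add: sgn_minus norm_sgn)

lemma sph_harm_sgn_diff:
  fixes Y :: "real^'n \<Rightarrow> 'a::real_normed_field"
  assumes "sph_harm k Y" "z \<noteq> 0" shows "(\<lambda>y. Y (sgn y)) differentiable (at z)"
proof -
  obtain P where P: "hom_poly k P" "\<forall>x\<in>sphere 0 1. Y x = P x"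
    using assms(1) unfolding sph_harm_def by blast
  have "(P \<circ> sgn) differentiable (at z)"
    by (rule differentiable_chain_at[OF sgn_differentiable_at[OF assms(2)] hom_poly_differentiable[OF P(1)]])
  then obtain D where D: "((P \<circ> sgn) has_derivative D) (at z)" unfolding differentiable_def by blast
  have "((\<lambda>y. Y (sgn y)) has_derivative D) (at z)"
    by (rule has_derivative_transform_within_open[OF D, of "UNIV - {0}"])
       (use assms(2) P(2) in \<open>auto simp: norm_sgn\<close>)
  then show ?thesis unfolding differentiable_def by blast
qed

lemma sph_partial_neg_Y:
  fixes Y :: "real^'n \<Rightarrow> 'a::real_normed_field"
  assumes "sph_harm k Y" "z \<noteq> 0"
  shows "sph_partial Y i (-z) = - ((-1)^k * sph_partial Y i z)"
proof -
  define G where "G = (\<lambda>y. Y (sgn y))"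
  define D where "D = frechet_derivative G (at z)"
  have GD: "(G has_derivative D) (at z)"
    using sph_harm_sgn_diff[OF assms] unfolding G_def D_def frechet_derivative_works .
  have lin: "bounded_linear D" using GD by (rule has_derivative_bounded_linear)
  have m: "((\<lambda>y::real^'n. - y) has_derivative (\<lambda>v. - v)) (at (-z))"
    by (intro derivative_intros)
  have "((\<lambda>y. G (- y)) has_derivative (\<lambda>v. D (- v))) (at (-z))"
    using has_derivative_compose[OF m] GD by simp
  then have H: "((\<lambda>y. (-1)^k * G (- y)) has_derivative (\<lambda>v. (-1)^k * D (- v))) (at (-z))"
    by (rule has_derivative_mult_right)
  have "(G has_derivative (\<lambda>v. (-1)^k * D (- v))) (at (-z))"
  proof (rule has_derivative_transform_within_open[OF H, of "UNIV - {0}"])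
    fix y :: "real^'n" assume "y \<in> UNIV - {0}"
    then have "y \<noteq> 0" by simp
    have "(-1::'a)^k * (-1)^k = 1" by (simp flip: power_mult_distrib)
    then show "(-1)^k * G (- y) = G y"
      unfolding G_def using sph_harm_sgn_neg[OF assms(1) \<open>y \<noteq> 0\<close>]
      by (simp add: mult.assoc[symmetric])
  qed (use assms(2) in auto)
  then have "frechet_derivative G (at (-z)) = (\<lambda>v. (-1)^k * D (- v))"
    by (rule frechet_derivative_at[symmetric])
  then show ?thesis
    unfolding sph_partial_def G_def[symmetric] D_def[symmetric]
    using bl_neg[OF lin] by simp
qed

lemma sph_partial_neg_odd:
  fixes g :: "real^'n \<Rightarrow> 'a::real_normed_vector"
  assumes odd: "\<And>z. z \<in> sphere 0 1 \<Longrightarrow> g (-z) = - g z" and "z \<noteq> 0"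
  shows "sph_partial g i (-z) = sph_partial g i z"
proof -
  define G where "G = (\<lambda>y. g (sgn y))"
  have Gneg: "G (-y) = - G y" if "y \<noteq> 0" for y
    unfolding G_def using odd[of "sgn y"] that by (simp add: sgn_minus norm_sgn)
  have tr: "(G has_derivative D) (at (-w))" if "(G has_derivative D) (at w)" "w \<noteq> 0" for D w
  proof -
    have lin: "bounded_linear D" using that(1) by (rule has_derivative_bounded_linear)
    have m: "((\<lambda>y::real^'n. - y) has_derivative (\<lambda>v. - v)) (at (-w))"
      by (intro derivative_intros)
    have "((\<lambda>y. G (- y)) has_derivative (\<lambda>v. D (- v))) (at (-w))"
      using has_derivative_compose[OF m] that(1) by simp
    then have "((\<lambda>y. - G (- y)) has_derivative (\<lambda>v. - D (- v))) (at (-w))"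
      by (rule has_derivative_minus)
    moreover have "(\<lambda>v. - D (- v)) = D" using bl_neg[OF lin] by auto
    ultimately have H: "((\<lambda>y. - G (- y)) has_derivative D) (at (-w))" by simp
    show ?thesis
      by (rule has_derivative_transform_within_open[OF H, of "UNIV - {0}"])
         (use that(2) Gneg in auto)
  qed
  have "(\<lambda>D. (G has_derivative D) (at (-z))) = (\<lambda>D. (G has_derivative D) (at z))"
    using tr[of _ z] tr[of _ "-z"] assms(2) by (auto simp: fun_eq_iff)
  then show ?thesis unfolding sph_partial_def frechet_derivative_def G_def[symmetric] by simp
qed

lemma sph_partial_const:
  fixes g :: "real^'n \<Rightarrow> 'a::real_normed_vector"
  assumes c: "\<And>z. z \<in> sphere 0 1 \<Longrightarrow> g z = c" and "z \<noteq> 0"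
  shows "sph_partial g i z = 0"
proof -
  have "((\<lambda>y. g (sgn y)) has_derivative (\<lambda>v. 0)) (at z)"
    by (rule has_derivative_transform_within_open[OF has_derivative_const[of c], of "UNIV - {0}"])
       (use assms in \<open>auto simp: norm_sgn\<close>)
  then show ?thesis unfolding sph_partial_def
    using frechet_derivative_at by metis
qed

lemma sphere_int_cong:
  fixes f g :: "real^'n \<Rightarrow> 'a::euclidean_space"
  assumes "\<And>z. z \<in> sphere 0 1 \<Longrightarrow> f z = g z"
  shows "sphere_int f = sphere_int g"
proof -
  have "integral (ball 0 1) (\<lambda>x. f (sgn x)) = integral (ball 0 1) (\<lambda>x. g (sgn x))"
    by (rule integral_spike[of "{0}"]) (auto simp: assms norm_sgn)
  then show ?thesis unfolding sphere_int_def by simp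
qed

lemma integral_ball_reflect:
  fixes g :: "real^'n \<Rightarrow> 'a::euclidean_space"
  shows "integral (ball 0 1) (\<lambda>x. g (-x)) = integral (ball 0 1) g"
proof -
  define a :: "real^'n" where "a = - Finite_Cartesian_Product.vec 1"
  define b :: "real^'n" where "b = Finite_Cartesian_Product.vec 1"
  define h where "h = (\<lambda>x. if x \<in> ball (0::real^'n) 1 then g x else 0)"
  have sub: "ball 0 1 \<subseteq> cbox a b"
  proof
    fix x :: "real^'n" assume "x \<in> ball 0 1"
    then have "norm x < 1" by simp
    then have "\<bar>vec_nth x i\<bar> \<le> 1" for i using component_le_norm_cart[of x i] by linarith
    then show "x \<in> cbox a b" unfolding a_def b_def mem_box_cart by (auto simp: abs_le_iff)
  qed
  have "integral (cbox (-b) (-a)) (\<lambda>x. h (-x)) = integral (cbox a b) h" by (rule integral_reflect)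
  moreover have "cbox (-b) (-a) = cbox a b" unfolding a_def b_def by simp
  moreover have "(\<lambda>x. h (-x)) = (\<lambda>x. if x \<in> ball 0 1 then g (-x) else 0)"
    unfolding h_def by (auto simp: fun_eq_iff)
  ultimately have "integral (cbox a b) (\<lambda>x. if x \<in> ball 0 1 then g (-x) else 0) = integral (cbox a b) h"
    by simp
  then show ?thesis unfolding h_def integral_restrict_Int using sub by (simp add: Int_absorb2)
qed

lemma sphere_int_odd:
  fixes f :: "real^'n \<Rightarrow> 'a::euclidean_space"
  assumes odd: "\<And>z. z \<in> sphere 0 1 \<Longrightarrow> f (-z) = - f z"
  shows "sphere_int f = 0"
proof -
  define I where "I = integral (ball 0 1) (\<lambda>x. f (sgn x))"
  have "I = integral (ball 0 1) (\<lambda>x. f (sgn (-x)))"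
    unfolding I_def by (rule integral_ball_reflect[symmetric])
  also have "\<dots> = integral (ball 0 1) (\<lambda>x. - f (sgn x))"
    by (rule integral_spike[of "{0}"]) (auto simp: odd norm_sgn sgn_minus)
  also have "\<dots> = - I" unfolding I_def by simp
  finally have "I = - I" .
  then have "I + I = 0" by (metis add.right_inverse)
  then have "(2::real) *\<^sub>R I = 0" by (simp add: scaleR_2)
  then have "I = 0" by simp
  then show ?thesis unfolding sphere_int_def I_def by simp
qed

lemma integral_cmult_complex:
  fixes f :: "'n::euclidean_space \<Rightarrow> complex"
  shows "integral S (\<lambda>x. c * f x) = c * integral S f"
proof (cases "c = 0 \<or> f integrable_on S")
  case True
  then show ?thesis
  proof
    assume "f integrable_on S"
    then show ?thesis using integral_linear[OF _ bounded_linear_mult_right, of f S c]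
      by (simp add: o_def)
  qed simp
next
  case False
  then have c: "c \<noteq> 0" and nf: "\<not> f integrable_on S" by auto
  have "\<not> (\<lambda>x. c * f x) integrable_on S"
  proof
    assume "(\<lambda>x. c * f x) integrable_on S"
    then have "((\<lambda>y. inverse c * y) \<circ> (\<lambda>x. c * f x)) integrable_on S"
      by (rule integrable_linear[OF _ bounded_linear_mult_right])
    then show False using nf c by (simp add: o_def)
  qed
  then show ?thesis using nf by (simp add: not_integrable_integral)
qed

lemma sphere_int_cmult:
  fixes f :: "real^'n \<Rightarrow> complex"
  shows "sphere_int (\<lambda>x. c * f x) = c * sphere_int f"
  unfolding sphere_int_def integral_cmult_complex by (simp add: scaleR_conv_of_real)

lemma eigenvalue_scalar_mat:
  fixes a :: "'a::field" and A :: "'a Matrix.mat"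
  assumes A: "A = Matrix.mat N N (\<lambda>(m, n). if m = n then a else 0)" and ev: "eigenvalue A \<mu>"
  shows "\<mu> = a"
proof -
  have dr: "dim_row A = N" "dim_col A = N" using A by simp_all
  obtain v where "eigenvector A v \<mu>" using ev unfolding eigenvalue_def by blast
  then have "v \<in> carrier_vec (dim_row A) \<and> v \<noteq> 0\<^sub>v (dim_row A) \<and> A *\<^sub>v v = \<mu> \<cdot>\<^sub>v v"
    unfolding eigenvector_def .
  then have vv: "v \<in> carrier_vec N \<and> v \<noteq> 0\<^sub>v N \<and> A *\<^sub>v v = \<mu> \<cdot>\<^sub>v v"
    unfolding dr .
  have v1: "v \<in> carrier_vec N" using vv by (rule conjunct1)
  have v2: "v \<noteq> 0\<^sub>v N" using vv by (rule conjunct1[OF conjunct2])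
  have v3: "A *\<^sub>v v = \<mu> \<cdot>\<^sub>v v" using vv by (rule conjunct2[OF conjunct2])
  have dv: "dim_vec v = N" using v1 carrier_dim_vec by blast
  obtain i where i: "i < N" "vec_index v i \<noteq> 0"
  proof (rule ccontr)
    assume "\<not> thesis"
    then have "\<forall>i<N. vec_index v i = 0" using that by blast
    then have "v = 0\<^sub>v N" using dv by (intro eq_vecI) auto
    then show False using v2 by simp
  qed
  have Aij: "A $$ (i, j) = (if i = j then a else 0)" if "j < N" for j
    using i(1) that A by simp
  have "vec_index (A *\<^sub>v v) i = scalar_prod (row A i) v" using i dr by simp
  also have "\<dots> = (\<Sum>j\<in>{0..<N}. (if i = j then a else 0) * vec_index v j)"
    unfolding scalar_prod_def dv using i dr Aij by (intro sum.cong refl) simp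
  also have "\<dots> = (\<Sum>j\<in>{0..<N}. if i = j then a * vec_index v j else 0)"
    by (intro sum.cong refl) simp
  also have "\<dots> = a * vec_index v i" using i by (simp add: sum.delta)
  finally have "a * vec_index v i = \<mu> * vec_index v i" using v3 i dv by simp
  then show ?thesis using i(2) by simp
qed

lemma sphere_int_zero: "sphere_int (\<lambda>x::real^'n. 0::complex) = 0"
  unfolding sphere_int_def by simp

lemma alg1: fixes a r b c s :: complex
  assumes "s * s = 1" shows "a * (-r) * (s * b) * (s * c) = -(a * r * b * c)"
proof -
  have "a * (-r) * (s * b) * (s * c) = - ((s * s) * (a * r * b * c))" by (simp add: mult_ac)
  then show ?thesis using assms by simp
qed

lemma alg2: fixes g c s :: complex
  assumes "s * s = 1" shows "(- s * g) * (s * c) = -(g * c)"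
proof -
  have "(- s * g) * (s * c) = - ((s * s) * (g * c))" by (simp add: mult_ac)
  then show ?thesis using assms by simp
qed

theorem theorem5p4:
  fixes \<rho> :: "real^'n \<Rightarrow> real" and p' :: nat
  assumes d3: "CARD('n) \<ge> 4"
    and rho_harm: "sph_harm p' \<rho>"
    and rho_norm: "sphere_int (\<lambda>x. \<rho> x ^ 2) = 1"
    and rho_const: "p' = 0 \<Longrightarrow> (\<forall>x\<in>sphere 0 1. \<rho> x = 1 / sqrt (sphere_area TYPE('n)))"
  shows "\<forall>k::nat. \<forall>Y. \<forall>\<mu>. k \<ge> 1 \<longrightarrow> sph_onb k (Ndim (CARD('n) - 1) k) Y \<longrightarrow>
           eigenvalue (pert_matrix k \<rho> Y (Ndim (CARD('n) - 1) k)) \<mu> \<longrightarrow>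
           (p' = 0 \<longrightarrow> \<mu> = - (of_nat k * complex_of_real (1 / sqrt (sphere_area TYPE('n))))) \<and>
           (odd p' \<longrightarrow> \<mu> = 0)"
proof (intro allI impI conjI)
  fix k :: nat and Y :: "nat \<Rightarrow> real^'n \<Rightarrow> complex" and \<mu> :: complex
  define N where "N = Ndim (CARD('n) - 1) k"
  assume k1: "k \<ge> 1" and onb: "sph_onb k (Ndim (CARD('n) - 1) k) Y"
    and ev: "eigenvalue (pert_matrix k \<rho> Y (Ndim (CARD('n) - 1) k)) \<mu>"
  have harm: "\<And>m. m < N \<Longrightarrow> sph_harm k (Y m)" using onb unfolding sph_onb_def N_def by blast
  have orth: "\<And>m n. m < N \<Longrightarrow> n < N \<Longrightarrow>
      sphere_int (\<lambda>x. Y m x * cnj (Y n x)) = (if m = n then 1 else 0)"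
    using onb unfolding sph_onb_def N_def by blast
  have ev': "eigenvalue (pert_matrix k \<rho> Y N) \<mu>" using ev unfolding N_def .
  define s :: complex where "s = (-1)^k"
  have ss: "s * s = 1" unfolding s_def by (simp flip: power_mult_distrib)
  have cs: "cnj s = s" unfolding s_def by simp
  have Yneg: "Y m (-z) = s * Y m z" if "m < N" "z \<in> sphere 0 1" for m z
    using sph_harm_neg[OF harm[OF that(1)] that(2)] unfolding s_def .
  have Ycneg: "cnj (Y m (-z)) = s * cnj (Y m z)" if "m < N" "z \<in> sphere 0 1" for m z
    using Yneg[OF that] cs by simp
  {
    assume p0: "p' = 0"
    define c where "c = 1 / sqrt (sphere_area TYPE('n))"
    have rc: "\<And>z. z \<in> sphere 0 1 \<Longrightarrow> \<rho> z = c" using rho_const[OF p0] unfolding c_def by blast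
    have entry: "- sphere_int (\<lambda>x. of_nat k * complex_of_real (\<rho> x) * Y m x * cnj (Y n x))
       - sphere_int (\<lambda>x. sph_grad_dot \<rho> (Y m) x * cnj (Y n x))
       = (if m = n then - (of_nat k * complex_of_real c) else 0)" if mn: "m < N" "n < N" for m n
    proof -
      have "sphere_int (\<lambda>x. of_nat k * complex_of_real (\<rho> x) * Y m x * cnj (Y n x))
          = sphere_int (\<lambda>x. (of_nat k * complex_of_real c) * (Y m x * cnj (Y n x)))"
        by (rule sphere_int_cong) (simp add: rc mult.assoc)
      also have "\<dots> = (of_nat k * complex_of_real c) * (if m = n then 1 else 0)"
        unfolding sphere_int_cmult orth[OF mn] ..
      finally have 1: "sphere_int (\<lambda>x. of_nat k * complex_of_real (\<rho> x) * Y m x * cnj (Y n x))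
          = (of_nat k * complex_of_real c) * (if m = n then 1 else 0)" .
      have "sphere_int (\<lambda>x. sph_grad_dot \<rho> (Y m) x * cnj (Y n x)) = sphere_int (\<lambda>x::real^'n. 0::complex)"
      proof (rule sphere_int_cong)
        fix z :: "real^'n" assume z: "z \<in> sphere 0 1"
        then have "z \<noteq> 0" by auto
        then have "sph_partial \<rho> i z = 0" for i using sph_partial_const[of \<rho> c z i] rc by blast
        then show "sph_grad_dot \<rho> (Y m) z * cnj (Y n z) = 0" unfolding sph_grad_dot_def by simp
      qed
      then have 2: "sphere_int (\<lambda>x. sph_grad_dot \<rho> (Y m) x * cnj (Y n x)) = 0"
        using sphere_int_zero by simp
      show ?thesis unfolding 1 2 by simp
    qed
    have "pert_matrix k \<rho> Y N = Matrix.mat N N (\<lambda>(m, n). if m = n then - (of_nat k * complex_of_real c) else 0)"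
      unfolding pert_matrix_def by (rule cong_mat) (use entry in auto)
    from eigenvalue_scalar_mat[OF this ev'] show "\<mu> = - (of_nat k * complex_of_real (1 / sqrt (sphere_area TYPE('n))))"
      unfolding c_def .
  }
  {
    assume op: "odd p'"
    have rneg: "\<rho> (-z) = - \<rho> z" if "z \<in> sphere 0 1" for z
      using sph_harm_neg[OF rho_harm that] op by simp
    have entry: "- sphere_int (\<lambda>x. of_nat k * complex_of_real (\<rho> x) * Y m x * cnj (Y n x))
       - sphere_int (\<lambda>x. sph_grad_dot \<rho> (Y m) x * cnj (Y n x))
       = (if m = n then 0 else 0)" if mn: "m < N" "n < N" for m n
    proof -
      have 1: "sphere_int (\<lambda>x. of_nat k * complex_of_real (\<rho> x) * Y m x * cnj (Y n x)) = 0"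
      proof (rule sphere_int_odd)
        fix z :: "real^'n" assume z: "z \<in> sphere 0 1"
        show "of_nat k * complex_of_real (\<rho> (-z)) * Y m (-z) * cnj (Y n (-z))
            = - (of_nat k * complex_of_real (\<rho> z) * Y m z * cnj (Y n z))"
          unfolding rneg[OF z] Yneg[OF mn(1) z] Ycneg[OF mn(2) z] of_real_minus
          by (rule alg1[OF ss])
      qed
      have 2: "sphere_int (\<lambda>x. sph_grad_dot \<rho> (Y m) x * cnj (Y n x)) = 0"
      proof (rule sphere_int_odd)
        fix z :: "real^'n" assume z: "z \<in> sphere 0 1"
        then have z0: "z \<noteq> 0" by auto
        have "sph_grad_dot \<rho> (Y m) (-z) = - s * sph_grad_dot \<rho> (Y m) z"
          unfolding sph_grad_dot_def sum_distrib_left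
          using sph_partial_neg_odd[of \<rho>, OF rneg z0] sph_partial_neg_Y[OF harm[OF mn(1)] z0]
          by (intro sum.cong refl) (simp add: s_def)
        then show "sph_grad_dot \<rho> (Y m) (-z) * cnj (Y n (-z))
            = - (sph_grad_dot \<rho> (Y m) z * cnj (Y n z))"
          unfolding Ycneg[OF mn(2) z] using alg2[OF ss] by simp
      qed
      show ?thesis unfolding 1 2 by simp
    qed
    have "pert_matrix k \<rho> Y N = Matrix.mat N N (\<lambda>(m, n). if m = n then 0 else 0)"
      unfolding pert_matrix_def by (rule cong_mat) (use entry in auto)
    from eigenvalue_scalar_mat[OF this ev'] show "\<mu> = 0" .
  }
qed

end
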